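(* Let $\rho$ be $\mathfrak L$-regular. For every $s\in(0,1)$, $t>0$, integer $K>1$, $E\in\mathbb R$, and every $u\in\mathcal X$ with $u\ge0$ and $\int_{\mathbb R}u(x)\,dx>0$, there exists $c=c(s,t,u,E,K)>0$ such that for all $x\in\mathbb R$, $$(F^2u)(x)\ge\frac{c}{1+|x|^{2-s}},$$ where $F=F_{K,t,s,E}$.
   Context: A probability density $p:\mathbb R\to[0,\infty)$ is $\mathfrak L$-regular ($\mathfrak L>0$) if: (i) $p(x)\le\mathfrak L(1+x^2)^{-1}$ for all $x$; (ii) $p(x)\ge\mathfrak L^{-1}$ for all $x\in[-\mathfrak L^{-1},\mathfrak L^{-1}]$; (iii) $p'$ exists everywhere and $|p'(x)|\le\mathfrak L(1+|x|)^{-1-1/\mathfrak L}$ for all $x$; (iv) for every $v>0$, $\inf_{|x|<v}p(x)>0$; (v) $p'(x)=0$ for only finitely many $x$. $V_0$ denotes a random variable with density $\rho$. Self-energy densities: for $E\in\mathbb R$, $p_E$ is the density of a fixed (arbitrarily chosen) real-valued solution $\Gamma$ of the distributional equation $\Gamma\overset{d}{=}\big(V_0-E-t^2\sum_{i=1}^K\Gamma_i\big)^{-1}$, where $\Gamma_1,\dots,\Gamma_K$ are i.i.d. copies of $\Gamma$ independent of $V_0$. $\rho_E$ denotes the density of $V_0-E-t^2\sum_{i=1}^{K-1}\Gamma_i$, where $\Gamma_i$ are i.i.d. with density $p_E$ and independent of $V_0$. Transfer operator: for $s\in(0,1)$, $F=F_{K,t,s,E}$ acts on functions $u:\mathbb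 R\to\mathbb R$ by $(Fu)(x)=\frac{t^{2-s}}{|x|^{2-s}}\int_{\mathbb R}\rho_E\big(-y-\tfrac{t^2}{x}\big)u(y)\,dy$. $\mathcal X$ is the Banach space of functions $f:\mathbb R\to\mathbb R$ with $\|f\|=\sup_x|f(x)|(1+|x|^{2-s})<\infty$. *)

theory Defs
  imports "HOL-Probability.Probability"
begin

definition prob_density :: "(real \<Rightarrow> real) \<Rightarrow> bool" where
  "prob_density p \<longleftrightarrow> (\<forall>x. 0 \<le> p x) \<and> p \<in> borel_measurable borel
     \<and> (\<integral>\<^sup>+ x. ennreal (p x) \<partial>lborel) = 1"

definition L_regular :: "real \<Rightarrow> (real \<Rightarrow> real) \<Rightarrow> bool" where
  "L_regular L p \<longleftrightarrow> 0 < L \<and> prob_density p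
     \<and> (\<forall>x. p x \<le> L / (1 + x^2))
     \<and> (\<forall>x. -(1/L) \<le> x \<and> x \<le> 1/L \<longrightarrow> 1/L \<le> p x)
     \<and> (\<forall>x. p differentiable (at x))
     \<and> (\<forall>x. \<bar>deriv p x\<bar> \<le> L * (1 + \<bar>x\<bar>) powr (-1 - 1/L))
     \<and> (\<forall>v>0. (INF x\<in>{x. \<bar>x\<bar> < v}. p x) > 0)
     \<and> finite {x. deriv p x = 0}"

text \<open>p is the density of a real solution Gamma of
  Gamma =d (V0 - E - t^2 sum_{i<K} Gamma_i)^{-1}, V0 with density rho,
  Gamma_i iid copies of Gamma independent of V0.\<close>
definition self_energy_density ::
  "(real \<Rightarrow> real) \<Rightarrow> nat \<Rightarrow> real \<Rightarrow> real \<Rightarrow> (real \<Rightarrow> real) \<Rightarrow> bool" where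
  "self_energy_density rho K t E p \<longleftrightarrow> prob_density p \<and>
     distr (density lborel rho \<Otimes>\<^sub>M PiM {..<K} (\<lambda>_. density lborel p)) borel
       (\<lambda>(v, g). 1 / (v - E - t^2 * (\<Sum>i<K. g i))) = density lborel p"

definition rhoE_density ::
  "(real \<Rightarrow> real) \<Rightarrow> nat \<Rightarrow> real \<Rightarrow> real \<Rightarrow> (real \<Rightarrow> real) \<Rightarrow> (real \<Rightarrow> real) \<Rightarrow> bool" where
  "rhoE_density rho K t E p rhoE \<longleftrightarrow> prob_density rhoE \<and>
     distr (density lborel rho \<Otimes>\<^sub>M PiM {..<K - 1} (\<lambda>_. density lborel p)) borel
       (\<lambda>(v, g). v - E - t^2 * (\<Sum>i<K - 1. g i)) = density lborel rhoE"

text \<open>Transfer operator F (dependence on K, E enters through rhoE).\<close>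
definition transfer :: "real \<Rightarrow> real \<Rightarrow> (real \<Rightarrow> real) \<Rightarrow> (real \<Rightarrow> real) \<Rightarrow> real \<Rightarrow> real" where
  "transfer t s rhoE u x =
     t powr (2 - s) / \<bar>x\<bar> powr (2 - s) * (\<integral> y. rhoE (- y - t^2 / x) * u y \<partial>lborel)"

definition in_X :: "real \<Rightarrow> (real \<Rightarrow> real) \<Rightarrow> bool" where
  "in_X s f \<longleftrightarrow> bdd_above (range (\<lambda>x. \<bar>f x\<bar> * (1 + \<bar>x\<bar> powr (2 - s))))"

end

theory Submission
  imports Defs
begin


lemma prob_density_prob_space:
  assumes "prob_density p" shows "prob_space (density lborel p)"
  using assms unfolding prob_density_def
  by (intro prob_spaceI) (auto simp: emeasure_density)

lemma prob_density_meas: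
  assumes "prob_density p" shows "p \<in> borel_measurable borel"
  using assms unfolding prob_density_def by auto

lemma KL:
  fixes h :: "real \<Rightarrow> ennreal"
  assumes rE: "rhoE_density rho K t E p rhoE" and pr: "prob_density rho" and pp: "prob_density p"
    and hm[measurable]: "h \<in> borel_measurable borel"
  shows "(\<integral>\<^sup>+w. h w * ennreal (rhoE w) \<partial>lborel) =
    (\<integral>\<^sup>+g. (\<integral>\<^sup>+w. h w * ennreal (rho (w + (E + t^2*(\<Sum>i<K-1. g i)))) \<partial>lborel)
        \<partial>PiM {..<K-1} (\<lambda>_. density lborel p))"
proof -
  let ?Q = "PiM {..<K-1} (\<lambda>_. density lborel p)"
  let ?R = "density lborel rho"
  interpret Q: prob_space ?Q by (intro prob_space_PiM prob_density_prob_space[OF pp])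
  interpret R: prob_space ?R by (rule prob_density_prob_space[OF pr])
  interpret RQ: pair_sigma_finite ?R ?Q ..
  have [measurable]: "rho \<in> borel_measurable borel" "rhoE \<in> borel_measurable borel" "p \<in> borel_measurable borel"
    using pr pp rE unfolding rhoE_density_def prob_density_def by auto
  have meas: "(\<lambda>(v, g). v - E - t^2 * (\<Sum>i<K - 1. g i)) \<in> measurable (?R \<Otimes>\<^sub>M ?Q) borel"
    by measurable
  have "(\<integral>\<^sup>+w. h w * ennreal (rhoE w) \<partial>lborel) = (\<integral>\<^sup>+w. h w \<partial>density lborel rhoE)"
    by (subst nn_integral_density) (auto simp: mult.commute)
  also have "\<dots> = (\<integral>\<^sup>+w. h w \<partial>distr (?R \<Otimes>\<^sub>M ?Q) borel (\<lambda>(v, g). v - E - t^2 * (\<Sum>i<K - 1. g i)))"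
    using rE unfolding rhoE_density_def by simp
  also have "\<dots> = (\<integral>\<^sup>+z. h ((\<lambda>(v, g). v - E - t^2 * (\<Sum>i<K - 1. g i)) z) \<partial>(?R \<Otimes>\<^sub>M ?Q))"
    by (rule nn_integral_distr[OF meas]) simp
  also have "\<dots> = (\<integral>\<^sup>+g. (\<integral>\<^sup>+v. h (v - E - t^2 * (\<Sum>i<K - 1. g i)) \<partial>?R) \<partial>?Q)"
    by (subst RQ.nn_integral_snd[symmetric]) (auto simp: case_prod_beta)
  also have "\<dots> = (\<integral>\<^sup>+g. (\<integral>\<^sup>+w. h w * ennreal (rho (w + (E + t^2*(\<Sum>i<K-1. g i)))) \<partial>lborel) \<partial>?Q)"
  proof (rule nn_integral_cong)
    fix g assume "g \<in> space ?Q"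
    let ?c = "E + t^2*(\<Sum>i<K-1. g i)"
    have "(\<integral>\<^sup>+v. h (v - E - t^2 * (\<Sum>i<K - 1. g i)) \<partial>?R) = (\<integral>\<^sup>+v. ennreal (rho v) * h (v - ?c) \<partial>lborel)"
      by (subst nn_integral_density) (auto simp: algebra_simps)
    also have "\<dots> = (\<integral>\<^sup>+w. ennreal (rho (?c + 1 * w)) * h (?c + 1 * w - ?c) \<partial>lborel)"
      by (subst nn_integral_real_affine[where c=1 and t="?c"]) auto
    also have "\<dots> = (\<integral>\<^sup>+w. h w * ennreal (rho (w + ?c)) \<partial>lborel)"
      by (auto simp: algebra_simps)
    finally show "(\<integral>\<^sup>+v. h (v - E - t^2 * (\<Sum>i<K - 1. g i)) \<partial>?R) = (\<integral>\<^sup>+w. h w * ennreal (rho (w + ?c)) \<partial>lborel)" .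
  qed
  finally show ?thesis .
qed


lemma L_regular_pd: "L_regular L rho \<Longrightarrow> prob_density rho"
  unfolding L_regular_def by auto

lemma KL_upper:
  fixes h :: "real \<Rightarrow> ennreal"
  assumes rE: "rhoE_density rho K t E p rhoE" and Lr: "L_regular L rho" and pp: "prob_density p"
    and hm[measurable]: "h \<in> borel_measurable borel"
  shows "(\<integral>\<^sup>+w. h w * ennreal (rhoE w) \<partial>lborel) \<le> ennreal L * (\<integral>\<^sup>+w. h w \<partial>lborel)"
proof -
  let ?Q = "PiM {..<K-1} (\<lambda>_. density lborel p)"
  interpret Q: prob_space ?Q by (intro prob_space_PiM prob_density_prob_space[OF pp])
  have pr: "prob_density rho" using Lr by (rule L_regular_pd)
  have bd: "\<And>x. rho x \<le> L" 
  proof -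
    fix x
    have "rho x \<le> L / (1 + x^2)" using Lr unfolding L_regular_def by auto
    also have "\<dots> \<le> L" 
    proof -
      have L: "L > 0" using Lr unfolding L_regular_def by auto
      have "L \<le> L * (1 + x^2)" using L by (simp add: algebra_simps)
      then show ?thesis using L by (simp add: divide_le_eq add_pos_nonneg)
    qed
    finally show "rho x \<le> L" .
  qed
  have "(\<integral>\<^sup>+w. h w * ennreal (rhoE w) \<partial>lborel) =
    (\<integral>\<^sup>+g. (\<integral>\<^sup>+w. h w * ennreal (rho (w + (E + t^2*(\<Sum>i<K-1. g i)))) \<partial>lborel) \<partial>?Q)"
    by (rule KL[OF rE pr pp hm])
  also have "\<dots> \<le> (\<integral>\<^sup>+g. (\<integral>\<^sup>+w. h w * ennreal L \<partial>lborel) \<partial>?Q)"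
    by (intro nn_integral_mono mult_left_mono) (auto simp: bd intro!: ennreal_leI)
  also have "\<dots> = ennreal L * (\<integral>\<^sup>+w. h w \<partial>lborel)"
    unfolding nn_integral_const Q.emeasure_space_1 by (simp add: nn_integral_multc nn_integral_cmult mult.commute)
  finally show ?thesis .
qed

lemma KL_lower:
  assumes rE: "rhoE_density rho K t E p rhoE" and Lr: "L_regular L rho" and pp: "prob_density p"
    and R: "0 < R"
  shows "\<exists>\<delta>>0. \<forall>h::real \<Rightarrow> ennreal. h \<in> borel_measurable borel \<longrightarrow> (\<forall>w. R < \<bar>w\<bar> \<longrightarrow> h w = 0) \<longrightarrow>
     ennreal \<delta> * (\<integral>\<^sup>+w. h w \<partial>lborel) \<le> (\<integral>\<^sup>+w. h w * ennreal (rhoE w) \<partial>lborel)"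
proof -
  let ?Q = "PiM {..<K-1} (\<lambda>_. density lborel p)"
  interpret Q: prob_space ?Q by (intro prob_space_PiM prob_density_prob_space[OF pp])
  have pr: "prob_density rho" using Lr by (rule L_regular_pd)
  have [measurable]: "p \<in> borel_measurable borel" using pp by (rule prob_density_meas)
  let ?c = "\<lambda>g. E + t^2*(\<Sum>i<K-1. g i)"
  let ?S = "\<lambda>n::nat. {g \<in> space ?Q. \<bar>?c g\<bar> \<le> real n}"
  have Sm: "?S n \<in> sets ?Q" for n by measurable
  have "\<exists>n. emeasure ?Q (?S n) \<noteq> 0"
  proof (rule ccontr)
    assume "\<not> ?thesis"
    then have "emeasure ?Q (\<Union>n. ?S n) = 0"
      by (intro emeasure_UN_eq_0) (use Sm in auto)
    moreover have "(\<Union>n. ?S n) = space ?Q"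
      using real_arch_simple by auto
    ultimately show False using Q.emeasure_space_1 by simp
  qed
  then obtain n where n: "emeasure ?Q (?S n) \<noteq> 0" by blast
  define M where "M = real n"
  have "(INF x\<in>{x. \<bar>x\<bar> < R + M + 1}. rho x) > 0"
    using Lr R unfolding L_regular_def M_def by auto
  then obtain m where m: "m > 0" and mle: "\<And>x. \<bar>x\<bar> < R + M + 1 \<Longrightarrow> m \<le> rho x"
  proof -
    let ?m = "(INF x\<in>{x. \<bar>x\<bar> < R + M + 1}. rho x)"
    have "bdd_below (rho ` {x. \<bar>x\<bar> < R + M + 1})"
      using pr unfolding prob_density_def by (auto intro: bdd_belowI[where m=0])
    then have "\<And>x. \<bar>x\<bar> < R + M + 1 \<Longrightarrow> ?m \<le> rho x"
      by (intro cINF_lower) auto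
    then show ?thesis using that \<open>?m > 0\<close> by blast
  qed
  define \<delta> where "\<delta> = m * measure ?Q (?S n)"
  have "measure ?Q (?S n) > 0"
    using n Q.emeasure_eq_measure by (simp add: zero_less_measure_iff)
  then have dpos: "\<delta> > 0" using m by (simp add: \<delta>_def)
  show ?thesis
  proof (intro exI[of _ \<delta>] conjI allI impI dpos)
    fix h :: "real \<Rightarrow> ennreal" assume hm[measurable]: "h \<in> borel_measurable borel"
      and hz: "\<forall>w. R < \<bar>w\<bar> \<longrightarrow> h w = 0"
    have "ennreal \<delta> * (\<integral>\<^sup>+w. h w \<partial>lborel) = (\<integral>\<^sup>+g. (ennreal m * (\<integral>\<^sup>+w. h w \<partial>lborel)) * indicator (?S n) g \<partial>?Q)"
    proof -
      have "(\<integral>\<^sup>+g. (ennreal m * (\<integral>\<^sup>+w. h w \<partial>lborel)) * indicator (?S n) g \<partial>?Q)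
         = (ennreal m * (\<integral>\<^sup>+w. h w \<partial>lborel)) * emeasure ?Q (?S n)"
        by (rule nn_integral_cmult_indicator[OF Sm])
      also have "\<dots> = ennreal \<delta> * (\<integral>\<^sup>+w. h w \<partial>lborel)"
        using m unfolding \<delta>_def Q.emeasure_eq_measure by (simp add: ennreal_mult mult_ac)
      finally show ?thesis by simp
    qed
    also have "\<dots> \<le> (\<integral>\<^sup>+g. (\<integral>\<^sup>+w. h w * ennreal (rho (w + ?c g)) \<partial>lborel) \<partial>?Q)"
    proof (intro nn_integral_mono)
      fix g assume "g \<in> space ?Q"
      show "(ennreal m * (\<integral>\<^sup>+w. h w \<partial>lborel)) * indicator (?S n) g \<le> (\<integral>\<^sup>+w. h w * ennreal (rho (w + ?c g)) \<partial>lborel)"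
      proof (cases "g \<in> ?S n")
        case True
        have "ennreal m * (\<integral>\<^sup>+w. h w \<partial>lborel) = (\<integral>\<^sup>+w. h w * ennreal m \<partial>lborel)"
          by (simp add: nn_integral_cmult mult.commute)
        also have "\<dots> \<le> (\<integral>\<^sup>+w. h w * ennreal (rho (w + ?c g)) \<partial>lborel)"
        proof (intro nn_integral_mono)
          fix w
          show "h w * ennreal m \<le> h w * ennreal (rho (w + ?c g))"
          proof (cases "\<bar>w\<bar> \<le> R")
            case True
            with \<open>g \<in> ?S n\<close> have "\<bar>w + ?c g\<bar> < R + M + 1" unfolding M_def by auto
            then show ?thesis by (intro mult_left_mono ennreal_leI mle) auto
          qed (use hz in auto)
        qed
        finally show ?thesis using True by simp
      qed simp
    qed
    also have "\<dots> = (\<integral>\<^sup>+w. h w * ennreal (rhoE w) \<partial>lborel)"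
      by (rule KL[OF rE pr pp hm, symmetric])
    finally show "ennreal \<delta> * (\<integral>\<^sup>+w. h w \<partial>lborel) \<le> (\<integral>\<^sup>+w. h w * ennreal (rhoE w) \<partial>lborel)" .
  qed
qed


lemma fld1: "(c::real) \<noteq> 0 \<Longrightarrow> d \<noteq> 0 \<Longrightarrow> e \<noteq> 0 \<Longrightarrow> a/(c/d)*(b/e) = (a*b)*d/(c*e)"
  by (simp add: field_simps)
lemma fld2: "(c::real) \<noteq> 0 \<Longrightarrow> e \<noteq> 0 \<Longrightarrow> (c*A)*(e*X)/(c*e) = A*X"
  by (simp add: field_simps)

lemma powr_alg:
  fixes t s b :: real assumes t: "t > 0" and b: "t^2 \<le> \<bar>b\<bar>" and s: "0 < s"
  shows "t powr (2-s) / \<bar>t^2/b\<bar> powr (2-s) * (t^2/b^2) \<le> t powr (-s)"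
proof -
  define x where "x = \<bar>b\<bar>"
  have bp: "x > 0" using b t unfolding x_def by (smt (verit) zero_less_power)
  have t2: "t powr 2 = t^2" using t by (simp add: powr_numeral)
  have e1: "\<bar>t^2/b\<bar> = t powr 2 / x" by (simp add: abs_div x_def t2)
  have e2: "t^2/b^2 = t powr 2 / x powr 2" using t bp by (simp add: x_def powr_numeral)
  have e3: "(t powr 2 / x) powr (2-s) = t powr (2*(2-s)) / x powr (2-s)"
    using t bp by (simp only: powr_divide[of "t powr 2" x] powr_powr)
  have "t powr (2-s) / \<bar>t^2/b\<bar> powr (2-s) * (t^2/b^2) = t powr s * x powr (-s)"
  proof -
    have f1: "t powr (2-s) * t powr 2 = t powr (2*(2-s)) * t powr s"
    proof -
      have "t powr (2-s) * t powr 2 = t powr ((2-s)+2)" by (simp only: powr_add)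
      moreover have "t powr (2*(2-s)) * t powr s = t powr (2*(2-s)+s)" by (simp only: powr_add)
      moreover have "(2-s)+2 = 2*(2-s)+s" by simp
      ultimately show ?thesis by simp
    qed
    have f2: "x powr (2-s) = x powr 2 * x powr (-s)"
    proof -
      have "x powr 2 * x powr (-s) = x powr (2 + -s)" by (simp only: powr_add)
      then show ?thesis by simp
    qed
    have p1: "t powr (2*(2-s)) > 0" "x powr 2 > 0" "x powr (2-s) > 0" using t bp by auto
    have "t powr (2-s) / (t powr (2*(2-s)) / x powr (2-s)) * (t powr 2 / x powr 2)
       = (t powr (2-s) * t powr 2) * x powr (2-s) / (t powr (2*(2-s)) * x powr 2)"
      using p1 by (intro fld1) auto
    also have "\<dots> = t powr s * x powr (-s)"
      unfolding f1 f2 using p1 by (intro fld2) auto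
    finally show ?thesis unfolding e1 e2 e3 .
  qed
  also have "\<dots> \<le> t powr s * (t^2) powr (-s)"
    using t b s bp unfolding x_def by (intro mult_left_mono powr_mono2') auto
  also have "\<dots> = t powr (-s)"
  proof -
    have "(t^2) powr (-s) = t powr (2 * -s)" using t2 by (metis powr_powr)
    moreover have "t powr s * t powr (2 * -s) = t powr (s + 2 * -s)" by (simp only: powr_add)
    moreover have "s + 2 * -s = -s" by simp
    ultimately show ?thesis by simp
  qed
  finally show ?thesis .
qed

lemma subst_bound:
  fixes \<Phi> :: "real \<Rightarrow> ennreal" and t s :: real
  assumes \<Phi>[measurable]: "\<Phi> \<in> borel_measurable borel" and t: "t > 0" and s: "0 < s"
  shows "(\<integral>\<^sup>+y. ennreal (t powr (2-s) / \<bar>y\<bar> powr (2-s)) * \<Phi> (t^2/y) * indicator {0<..<1} y \<partial>lborel)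
     \<le> ennreal (t powr (-s)) * (\<integral>\<^sup>+b. \<Phi> b \<partial>lborel)"
proof -
  define f where "f = (\<lambda>y. ennreal (t powr (2-s) / \<bar>y\<bar> powr (2-s)) * \<Phi> (t^2/y))"
  have fm[measurable]: "f \<in> borel_measurable borel" unfolding f_def by measurable
  define g where "g = (\<lambda>b::real. - (t^2) / b)"
  define g' where "g' = (\<lambda>b::real. t^2 / b^2)"
  define A where "A = (\<lambda>n::nat. {t^2 / (real n + t^2 + 1) .. 1})"
  have step: "(\<integral>\<^sup>+y. f y * indicator (A n) y \<partial>lborel) \<le> ennreal (t powr (-s)) * (\<integral>\<^sup>+b. \<Phi> b \<partial>lborel)" for n
  proof -
    define a where "a = - (real n + t^2 + 1)"
    have ab: "a < - (t^2)" unfolding a_def by simp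
    have ga: "g a = t^2 / (real n + t^2 + 1)" unfolding g_def a_def by (simp only: divide_minus_right minus_minus)
    have gb: "g (-(t^2)) = 1" unfolding g_def using t by simp
    have neg: "x \<in> {a..-(t^2)} \<Longrightarrow> x < 0" for x using t by (auto simp: a_def) (smt (verit) zero_less_power)
    have "(\<integral>\<^sup>+y. f y * indicator (A n) y \<partial>lborel) = (\<integral>\<^sup>+y. f y * indicator {g a .. g (-(t^2))} y \<partial>lborel)"
      unfolding A_def ga gb ..
    also have "\<dots> = (\<integral>\<^sup>+x. f (g x) * ennreal (g' x) * indicator {a..-(t^2)} x \<partial>lborel)"
    proof (rule nn_integral_substitution_aux[OF fm _ _ _ _ ab])
      show "\<And>x. x \<in> {a..- (t^2)} \<Longrightarrow> (g has_real_derivative g' x) (at x)"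
        unfolding g_def g'_def using neg
        by (auto intro!: derivative_eq_intros simp: power2_eq_square field_simps)
      show "continuous_on {a..- (t^2)} g'"
      proof -
        have nz: "\<forall>x\<in>{a..-(t^2)}. x^2 \<noteq> 0" using neg by force
        show ?thesis unfolding g'_def by (intro continuous_intros nz)
      qed
      show "\<And>x. x \<in> {a..- (t^2)} \<Longrightarrow> 0 \<le> g' x" unfolding g'_def by auto
    qed (use t in auto)
    also have "\<dots> \<le> (\<integral>\<^sup>+x. ennreal (t powr (-s)) * \<Phi> (-x) \<partial>lborel)"
    proof (intro nn_integral_mono)
      fix x
      show "f (g x) * ennreal (g' x) * indicator {a..-(t^2)} x \<le> ennreal (t powr (-s)) * \<Phi> (-x)"
      proof (cases "x \<in> {a..-(t^2)}")
        case True
        then have x0: "x < 0" by (rule neg)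
        have tx: "t^2 \<le> \<bar>x\<bar>" using True by auto
        have e: "t^2 / g x = - x" unfolding g_def using t x0 by (simp add: field_simps)
        have ag: "\<bar>g x\<bar> = \<bar>t^2/x\<bar>" unfolding g_def by (simp add: abs_div)
        have "f (g x) * ennreal (g' x) = ennreal (t powr (2-s) / \<bar>t^2/x\<bar> powr (2-s) * (t^2/x^2)) * \<Phi> (-x)"
        proof -
          have "f (g x) * ennreal (g' x) = (ennreal (t powr (2-s) / \<bar>t^2/x\<bar> powr (2-s)) * ennreal (t^2/x^2)) * \<Phi> (-x)"
            unfolding f_def e ag g'_def by (simp only: mult_ac)
          also have "ennreal (t powr (2-s) / \<bar>t^2/x\<bar> powr (2-s)) * ennreal (t^2/x^2) = ennreal (t powr (2-s) / \<bar>t^2/x\<bar> powr (2-s) * (t^2/x^2))"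
            by (rule ennreal_mult[symmetric]) auto
          finally show ?thesis .
        qed
        also have "\<dots> \<le> ennreal (t powr (-s)) * \<Phi> (-x)"
          by (intro mult_right_mono ennreal_leI powr_alg[OF t tx s]) auto
        finally show ?thesis using True by simp
      qed simp
    qed
    also have "\<dots> = ennreal (t powr (-s)) * (\<integral>\<^sup>+x. \<Phi> (-x) \<partial>lborel)"
      by (simp add: nn_integral_cmult)
    also have "(\<integral>\<^sup>+x. \<Phi> (-x) \<partial>lborel) = (\<integral>\<^sup>+b. \<Phi> b \<partial>lborel)"
      using nn_integral_real_affine[OF \<Phi>, of "-1" 0] by simp
    finally show ?thesis .
  qed
  have inc: "incseq (\<lambda>n y. f y * indicator (A n) y)"
  proof (intro incseq_SucI le_funI mult_left_mono)
    fix n y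
    have pp: "0 < real n + t^2 + 1" by (smt (verit) of_nat_0_le_iff zero_le_power2)
    have "t^2 / (real (Suc n) + t^2 + 1) \<le> t^2 / (real n + t^2 + 1)"
      using t pp by (intro divide_left_mono) (auto simp: add_pos_nonneg intro!: mult_pos_pos)
    then have "A n \<subseteq> A (Suc n)" unfolding A_def by auto
    then show "indicator (A n) y \<le> (indicator (A (Suc n)) y :: ennreal)"
      by (auto simp: indicator_def)
  qed auto
  have "(\<integral>\<^sup>+y. f y * indicator {0<..<1} y \<partial>lborel) \<le> (\<integral>\<^sup>+y. (SUP n. f y * indicator (A n) y) \<partial>lborel)"
  proof (intro nn_integral_mono)
    fix y
    show "f y * indicator {0<..<1} y \<le> (SUP n. f y * indicator (A n) y)"
    proof (cases "y \<in> {0<..<1}")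
      case True
      obtain n :: nat where n: "t^2 / y \<le> real n" using real_arch_simple by blast
      have "t^2 / (real n + t^2 + 1) \<le> y"
      proof -
        have y0: "y > 0" using True by auto
        have pp: "0 < real n + t^2 + 1" by (smt (verit) of_nat_0_le_iff zero_le_power2)
        have "t^2 \<le> real n * y" using n y0 by (simp add: pos_divide_le_eq)
        also have "\<dots> \<le> (real n + t^2 + 1) * y" using y0 by (intro mult_right_mono) auto
        finally show ?thesis using pp by (simp add: pos_divide_le_eq mult.commute)
      qed
      then have "y \<in> A n" using True unfolding A_def by auto
      then show ?thesis using True by (intro SUP_upper2[of n]) auto
    qed simp
  qed
  also have "\<dots> = (SUP n. (\<integral>\<^sup>+y. f y * indicator (A n) y \<partial>lborel))"
    by (rule nn_integral_monotone_convergence_SUP[OF inc]) (auto simp: A_def)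
  also have "\<dots> \<le> ennreal (t powr (-s)) * (\<integral>\<^sup>+b. \<Phi> b \<partial>lborel)"
    by (intro SUP_least step)
  finally show ?thesis unfolding f_def .
qed


lemma one_plus_powr: fixes z q :: real assumes z: "0 \<le> z" and q: "0 < q"
  shows "(1+z) powr q \<le> 2 powr q * (1 + z powr q)"
proof (cases "z \<le> 1")
  case True
  have "(1+z) powr q \<le> 2 powr q" using True z q by (intro powr_mono2) auto
  also have "\<dots> \<le> 2 powr q * (1 + z powr q)" by (simp add: mult_le_cancel_left1)
  finally show ?thesis .
next
  case False
  have "(1+z) powr q \<le> (2*z) powr q" using False z q by (intro powr_mono2) auto
  also have "\<dots> = 2 powr q * z powr q" using z by (simp add: powr_mult)
  also have "\<dots> \<le> 2 powr q * (1 + z powr q)" by (intro mult_left_mono) auto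
  finally show ?thesis .
qed

lemma final_arith: fixes t x q :: real assumes t: "t > 0" and q: "0 < q"
  shows "(t^2 + 2*\<bar>x\<bar>) powr q \<le> (max (t^2) 2 powr q * 2 powr q) * (1 + \<bar>x\<bar> powr q)"
proof -
  define D where "D = max (t^2) 2"
  have D: "D > 0" "t^2 \<le> D" "2 \<le> D" unfolding D_def by auto
  have "t^2 + 2*\<bar>x\<bar> \<le> D * (1 + \<bar>x\<bar>)"
  proof -
    have "2*\<bar>x\<bar> \<le> D*\<bar>x\<bar>" using D by (intro mult_right_mono) auto
    then show ?thesis using D by (simp add: algebra_simps)
  qed
  then have "(t^2 + 2*\<bar>x\<bar>) powr q \<le> (D * (1 + \<bar>x\<bar>)) powr q"
    using q by (intro powr_mono2) (auto intro!: add_nonneg_nonneg)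
  also have "\<dots> = D powr q * (1 + \<bar>x\<bar>) powr q" using D by (simp add: powr_mult)
  also have "\<dots> \<le> D powr q * (2 powr q * (1 + \<bar>x\<bar> powr q))"
    by (intro mult_left_mono one_plus_powr q) auto
  finally show ?thesis unfolding D_def by (simp add: mult_ac)
qed

locale lset =
  fixes L s t E :: real and K :: nat and rho p rhoE u :: "real \<Rightarrow> real"
  assumes Lr: "L_regular L rho" and s0: "0 < s" and s1: "s < 1" and t0: "0 < t"
    and sed: "self_energy_density rho K t E p" and rE: "rhoE_density rho K t E p rhoE"
    and uX: "in_X s u" and u0: "\<forall>x. 0 \<le> u x" and ui: "(\<integral>x. u x \<partial>lborel) > 0"
begin

lemma pp: "prob_density p" using sed unfolding self_energy_density_def by auto
lemma pr: "prob_density rho" using Lr by (rule L_regular_pd)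
lemma prE: "prob_density rhoE" using rE unfolding rhoE_density_def by auto
lemma rho_m[measurable]: "rho \<in> borel_measurable borel" using pr by (rule prob_density_meas)
lemma rhoE_m[measurable]: "rhoE \<in> borel_measurable borel" using prE by (rule prob_density_meas)
lemma rhoE_nn: "0 \<le> rhoE x" using prE unfolding prob_density_def by auto
lemma rhoE_1: "(\<integral>\<^sup>+w. ennreal (rhoE w) \<partial>lborel) = 1" using prE unfolding prob_density_def by auto
lemma u_int: "integrable lborel u" using ui not_integrable_integral_eq by fastforce
lemma u_m[measurable]: "u \<in> borel_measurable borel"
  using borel_measurable_integrable[OF u_int] by simp
lemma u_fin: "(\<integral>\<^sup>+z. ennreal (u z) \<partial>lborel) < \<infinity>"
  using nn_integral_eq_integral[OF u_int] u0 by simp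
lemma Lpos: "0 < L" using Lr unfolding L_regular_def by auto

lemma u_bd: obtains B where "B > 0" "\<And>x. u x \<le> B"
proof -
  obtain B where B: "\<And>x. \<bar>u x\<bar> * (1 + \<bar>x\<bar> powr (2 - s)) \<le> B"
    using uX unfolding in_X_def bdd_above_def by auto
  have "u x \<le> max B 1" for x
  proof -
    have "u x = \<bar>u x\<bar> * 1" using u0 by simp
    also have "\<dots> \<le> \<bar>u x\<bar> * (1 + \<bar>x\<bar> powr (2 - s))" by (intro mult_left_mono) auto
    also have "\<dots> \<le> B" by (rule B)
    finally show ?thesis by simp
  qed
  then show ?thesis using that[of "max B 1"] by auto
qed

definition G :: "real \<Rightarrow> ennreal" where
  "G b = (\<integral>\<^sup>+z. ennreal (rhoE (-z-b) * u z) \<partial>lborel)"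

lemma G_m[measurable]: "G \<in> borel_measurable borel"
  unfolding G_def[abs_def] by measurable

lemma G_alt: "G b = (\<integral>\<^sup>+w. ennreal (u (-b-w)) * ennreal (rhoE w) \<partial>lborel)"
proof -
  have "G b = ennreal \<bar>-1\<bar> * (\<integral>\<^sup>+w. ennreal (rhoE (-(-b + -1*w)-b) * u (-b + -1*w)) \<partial>lborel)"
    unfolding G_def by (rule nn_integral_real_affine) auto
  also have "\<dots> = (\<integral>\<^sup>+w. ennreal (u (-b-w)) * ennreal (rhoE w) \<partial>lborel)"
    using u0 rhoE_nn by (simp add: ennreal_mult mult.commute)
  finally show ?thesis .
qed

lemma G_bd: obtains B where "B > 0" "\<And>b. G b \<le> ennreal B"
proof -
  obtain B where B: "B > 0" "\<And>x. u x \<le> B" using u_bd by blast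
  have "G b \<le> ennreal B" for b
  proof -
    have "G b \<le> (\<integral>\<^sup>+w. ennreal B * ennreal (rhoE w) \<partial>lborel)"
      unfolding G_alt by (intro nn_integral_mono mult_right_mono ennreal_leI B) auto
    also have "\<dots> = ennreal B" by (simp add: nn_integral_cmult rhoE_1)
    finally show ?thesis .
  qed
  then show ?thesis using that B by blast
qed

lemma G_fin: "G b < \<infinity>"
  using G_bd by (metis ennreal_less_top le_less_trans infinity_ennreal_def)

lemma G_total: "(\<integral>\<^sup>+b. G b \<partial>lborel) = (\<integral>\<^sup>+z. ennreal (u z) \<partial>lborel)"
proof -
  have "(\<integral>\<^sup>+b. G b \<partial>lborel) = (\<integral>\<^sup>+b. (\<integral>\<^sup>+z. ennreal (rhoE (-z-b) * u z) \<partial>lborel) \<partial>lborel)"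
    unfolding G_def ..
  also have "\<dots> = (\<integral>\<^sup>+z. (\<integral>\<^sup>+b. ennreal (rhoE (-z-b) * u z) \<partial>lborel) \<partial>lborel)"
    by (rule lborel_pair.Fubini') measurable
  also have "\<dots> = (\<integral>\<^sup>+z. ennreal (u z) \<partial>lborel)"
  proof (rule nn_integral_cong)
    fix z
    have "(\<integral>\<^sup>+b. ennreal (rhoE (-z-b) * u z) \<partial>lborel) = (\<integral>\<^sup>+b. ennreal (rhoE (-z-b)) * ennreal (u z) \<partial>lborel)"
      using u0 rhoE_nn by (simp add: ennreal_mult)
    also have "\<dots> = (\<integral>\<^sup>+b. ennreal (rhoE (-z-b)) \<partial>lborel) * ennreal (u z)"
      by (simp add: nn_integral_multc)
    also have "(\<integral>\<^sup>+b. ennreal (rhoE (-z-b)) \<partial>lborel) = ennreal \<bar>-1\<bar> * (\<integral>\<^sup>+w. ennreal (rhoE (-z-(-z + -1*w))) \<partial>lborel)"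
      by (rule nn_integral_real_affine) auto
    also have "\<dots> = 1" by (simp add: rhoE_1)
    finally show "(\<integral>\<^sup>+b. ennreal (rhoE (-z-b) * u z) \<partial>lborel) = ennreal (u z)" by simp
  qed
  finally show ?thesis .
qed

lemma u_mass: obtains R1 where "R1 > 0" "(\<integral>\<^sup>+z. ennreal (u z) * indicator {-R1..R1} z \<partial>lborel) \<noteq> 0"
proof -
  have "\<exists>n::nat. (\<integral>\<^sup>+z. ennreal (u z) * indicator {-(real n+1)..real n+1} z \<partial>lborel) \<noteq> 0"
  proof (rule ccontr)
    assume "\<not> ?thesis"
    then have "\<forall>n::nat. AE z in lborel. ennreal (u z) * indicator {-(real n+1)..real n+1} z = 0"
      by (subst (asm) nn_integral_0_iff_AE) auto
    then have "AE z in lborel. \<forall>n::nat. ennreal (u z) * indicator {-(real n+1)..real n+1} z = 0"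
      by (simp only: AE_all_countable) simp
    then have "AE z in lborel. ennreal (u z) = 0"
    proof (rule AE_mp, intro AE_I2 impI)
      fix z assume H: "\<forall>n::nat. ennreal (u z) * indicator {-(real n+1)..real n+1} z = 0"
      obtain n :: nat where "\<bar>z\<bar> \<le> real n" using real_arch_simple by blast
      then have "z \<in> {-(real n+1)..real n+1}" by auto
      then show "ennreal (u z) = 0" using H[rule_format, of n] by simp
    qed
    then have "(\<integral>\<^sup>+z. ennreal (u z) \<partial>lborel) = 0" by (subst nn_integral_0_iff_AE) auto
    moreover have "(\<integral>\<^sup>+z. ennreal (u z) \<partial>lborel) = ennreal (\<integral>z. u z \<partial>lborel)"
      using nn_integral_eq_integral[OF u_int] u0 by simp
    ultimately show False using ui by simp
  qed
  then obtain n :: nat where "(\<integral>\<^sup>+z. ennreal (u z) * indicator {-(real n+1)..real n+1} z \<partial>lborel) \<noteq> 0" by blast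
  then show ?thesis using that[of "real n + 1"] by auto
qed

lemma G_low: obtains d1 where "d1 > 0" "\<And>b. \<bar>b\<bar> \<le> t^2 \<Longrightarrow> ennreal d1 \<le> G b"
proof -
  obtain R1 where R1: "R1 > 0" and mu0: "(\<integral>\<^sup>+z. ennreal (u z) * indicator {-R1..R1} z \<partial>lborel) \<noteq> 0"
    using u_mass by blast
  define mu where "mu = (\<integral>\<^sup>+z. ennreal (u z) * indicator {-R1..R1} z \<partial>lborel)"
  define R where "R = R1 + t^2"
  have R: "R > 0" unfolding R_def using R1 by (simp add: add_pos_nonneg)
  obtain d where d: "d > 0" and dK: "\<And>h::real \<Rightarrow> ennreal. h \<in> borel_measurable borel \<Longrightarrow> (\<forall>w. R < \<bar>w\<bar> \<longrightarrow> h w = 0) \<Longrightarrow>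
     ennreal d * (\<integral>\<^sup>+w. h w \<partial>lborel) \<le> (\<integral>\<^sup>+w. h w * ennreal (rhoE w) \<partial>lborel)"
    using KL_lower[OF rE Lr pp R] by blast
  have mufin: "mu < \<infinity>"
  proof -
    have "mu \<le> (\<integral>\<^sup>+z. ennreal (u z) \<partial>lborel)" unfolding mu_def
      by (intro nn_integral_mono) (auto simp: indicator_def)
    then show ?thesis using u_fin by (simp add: le_less_trans)
  qed
  have mupos: "enn2real mu > 0" using mu0 mufin unfolding mu_def[symmetric]
    by (simp add: enn2real_positive_iff) (metis not_gr_zero)
  have "ennreal (d * enn2real mu) \<le> G b" if b: "\<bar>b\<bar> \<le> t^2" for b
  proof -
    define h where "h = (\<lambda>w. ennreal (u (-b-w)) * indicator {-R..R} w)"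
    have hm: "h \<in> borel_measurable borel" unfolding h_def by measurable
    have hz: "\<forall>w. R < \<bar>w\<bar> \<longrightarrow> h w = 0" unfolding h_def by (auto simp: indicator_def)
    have "ennreal (d * enn2real mu) = ennreal d * mu"
      using d mufin by (simp add: ennreal_mult)
    also have "mu \<le> (\<integral>\<^sup>+w. h w \<partial>lborel)"
    proof -
      have "(\<integral>\<^sup>+w. h w \<partial>lborel) = ennreal \<bar>-1\<bar> * (\<integral>\<^sup>+z. h (-b + -1*z) \<partial>lborel)"
        by (rule nn_integral_real_affine[OF hm]) auto
      also have "\<dots> = (\<integral>\<^sup>+z. ennreal (u z) * indicator {-R..R} (-b-z) \<partial>lborel)"
        unfolding h_def by simp
      finally have e: "(\<integral>\<^sup>+w. h w \<partial>lborel) = (\<integral>\<^sup>+z. ennreal (u z) * indicator {-R..R} (-b-z) \<partial>lborel)" .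
      show ?thesis unfolding e mu_def
      proof (intro nn_integral_mono mult_left_mono)
        fix z
        show "indicator {-R1..R1} z \<le> (indicator {-R..R} (-b-z) :: ennreal)"
          using b unfolding R_def by (auto simp: indicator_def)
      qed auto
    qed
    also have "ennreal d * (\<integral>\<^sup>+w. h w \<partial>lborel) \<le> (\<integral>\<^sup>+w. h w * ennreal (rhoE w) \<partial>lborel)"
      by (rule dK[OF hm hz])
    also have "\<dots> \<le> G b" unfolding G_alt h_def
      by (intro nn_integral_mono) (auto simp: indicator_def)
    finally show ?thesis by (simp add: mult_left_mono)
  qed
  then show ?thesis using that[of "d * enn2real mu"] d mupos by auto
qed

abbreviation "Fu \<equiv> transfer t s rhoE u"

lemma Fu_eq: "Fu y = t powr (2-s) / \<bar>y\<bar> powr (2-s) * enn2real (G (t^2/y))"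
proof -
  have "(\<integral>z. rhoE (- z - t^2 / y) * u z \<partial>lborel) = enn2real (G (t^2/y))"
    unfolding G_def by (rule integral_eq_nn_integral) (auto simp: rhoE_nn u0)
  then show ?thesis unfolding transfer_def by simp
qed

lemma Fu_m[measurable]: "Fu \<in> borel_measurable borel"
proof -
  have "Fu = (\<lambda>y. t powr (2-s) / \<bar>y\<bar> powr (2-s) * enn2real (G (t^2/y)))"
    using Fu_eq by auto
  also have "\<dots> \<in> borel_measurable borel" by measurable
  finally show ?thesis .
qed

lemma Fu_nn: "0 \<le> Fu y"
  unfolding Fu_eq by (auto intro!: mult_nonneg_nonneg divide_nonneg_nonneg)

lemma Fu_enn: "ennreal (Fu y) = ennreal (t powr (2-s) / \<bar>y\<bar> powr (2-s)) * G (t^2/y)"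
proof -
  have "ennreal (Fu y) = ennreal (t powr (2-s) / \<bar>y\<bar> powr (2-s)) * ennreal (enn2real (G (t^2/y)))"
    unfolding Fu_eq by (rule ennreal_mult) auto
  also have "ennreal (enn2real (G (t^2/y))) = G (t^2/y)" using G_fin by simp
  finally show ?thesis .
qed

lemma Fu_up1: obtains C where "C > 0" "\<And>y. 1 \<le> \<bar>y\<bar> \<Longrightarrow> Fu y \<le> C"
proof -
  obtain B where B: "B > 0" "\<And>b. G b \<le> ennreal B" using G_bd by blast
  have "Fu y \<le> t powr (2-s) * B" if y: "1 \<le> \<bar>y\<bar>" for y
  proof -
    have "1 \<le> \<bar>y\<bar> powr (2-s)" using y s1 by (simp add: ge_one_powr_ge_zero)
    then have "t powr (2-s) / \<bar>y\<bar> powr (2-s) \<le> t powr (2-s)"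
    proof -
      have "t powr (2-s) \<le> t powr (2-s) * \<bar>y\<bar> powr (2-s)"
        using \<open>1 \<le> \<bar>y\<bar> powr (2-s)\<close> by (simp add: mult_le_cancel_left1)
      then show ?thesis using \<open>1 \<le> \<bar>y\<bar> powr (2-s)\<close> by (simp add: divide_le_eq)
    qed
    moreover have "enn2real (G (t^2/y)) \<le> B"
    proof -
      have "enn2real (G (t^2/y)) \<le> enn2real (ennreal B)" by (rule enn2real_mono[OF B(2)]) simp
      then show ?thesis using B(1) by simp
    qed
    moreover have "0 \<le> t powr (2-s)" "0 \<le> enn2real (G (t^2/y))" by simp_all
    ultimately show ?thesis unfolding Fu_eq
      by (rule mult_mono)
  qed
  then show ?thesis using that[of "t powr (2-s) * B"] B t0 by auto
qed

lemma Fu_low1: obtains d where "d > 0" "\<And>y. 1 \<le> \<bar>y\<bar> \<Longrightarrow> d / \<bar>y\<bar> powr (2-s) \<le> Fu y"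
proof -
  obtain d1 where d1: "d1 > 0" "\<And>b. \<bar>b\<bar> \<le> t^2 \<Longrightarrow> ennreal d1 \<le> G b" using G_low by blast
  have "t powr (2-s) * d1 / \<bar>y\<bar> powr (2-s) \<le> Fu y" if y: "1 \<le> \<bar>y\<bar>" for y
  proof -
    have "t^2/\<bar>y\<bar> \<le> t^2/1" using y by (intro divide_left_mono) auto
    then have "\<bar>t^2/y\<bar> \<le> t^2" by (simp add: abs_div)
    then have "enn2real (ennreal d1) \<le> enn2real (G (t^2/y))" 
      using G_fin[of "t^2/y"] by (intro enn2real_mono[OF d1(2)]) auto
    then have "d1 \<le> enn2real (G (t^2/y))" using d1(1) by simp
    then have "t powr (2-s) / \<bar>y\<bar> powr (2-s) * d1 \<le> t powr (2-s) / \<bar>y\<bar> powr (2-s) * enn2real (G (t^2/y))"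
      by (intro mult_left_mono) auto
    then show ?thesis unfolding Fu_eq by simp
  qed
  then show ?thesis using that[of "t powr (2-s) * d1"] d1 t0 by auto
qed

lemma Fu_small: "(\<integral>\<^sup>+y. ennreal (Fu y) * indicator {-1<..<1} y \<partial>lborel) < \<infinity>"
proof -
  have Gt: "(\<integral>\<^sup>+b. G b \<partial>lborel) < \<infinity>" using G_total u_fin by simp
  have P: "(\<integral>\<^sup>+y. ennreal (Fu y) * indicator {0<..<1} y \<partial>lborel) < \<infinity>"
  proof -
    have "(\<integral>\<^sup>+y. ennreal (Fu y) * indicator {0<..<1} y \<partial>lborel)
        = (\<integral>\<^sup>+y. ennreal (t powr (2-s) / \<bar>y\<bar> powr (2-s)) * G (t^2/y) * indicator {0<..<1} y \<partial>lborel)"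
      unfolding Fu_enn ..
    also have "\<dots> \<le> ennreal (t powr (-s)) * (\<integral>\<^sup>+b. G b \<partial>lborel)"
      by (rule subst_bound[OF G_m t0 s0])
    also have "\<dots> < \<infinity>" using Gt by (simp add: ennreal_mult_less_top)
    finally show ?thesis .
  qed
  have N: "(\<integral>\<^sup>+y. ennreal (Fu y) * indicator {-1<..<0} y \<partial>lborel) < \<infinity>"
  proof -
    have Gm': "(\<lambda>b. G (-b)) \<in> borel_measurable borel" by measurable
    have "(\<integral>\<^sup>+y. ennreal (Fu y) * indicator {-1<..<0} y \<partial>lborel)
        = ennreal \<bar>-1\<bar> * (\<integral>\<^sup>+y. ennreal (Fu (0 + -1*y)) * indicator {-1<..<0} (0 + -1*y) \<partial>lborel)"
      by (rule nn_integral_real_affine) auto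
    also have "\<dots> = (\<integral>\<^sup>+y. ennreal (t powr (2-s) / \<bar>y\<bar> powr (2-s)) * G (-(t^2/y)) * indicator {0<..<1} y \<partial>lborel)"
    proof -
      have "ennreal \<bar>-1\<bar> = 1" by simp
      moreover have "\<And>y. ennreal (Fu (0 + -1*y)) * indicator {-1<..<0} (0 + -1*y)
          = ennreal (t powr (2-s) / \<bar>y\<bar> powr (2-s)) * G (-(t^2/y)) * indicator {0<..<1} y"
      proof -
        fix y :: real
        have i: "indicator {-1<..<0} (0 + -1*y) = (indicator {0<..<1} y :: ennreal)"
          by (auto simp: indicator_def)
        have "ennreal (Fu (0 + -1*y)) = ennreal (t powr (2-s) / \<bar>y\<bar> powr (2-s)) * G (-(t^2/y))"
          unfolding Fu_enn by simp
        then show "ennreal (Fu (0 + -1*y)) * indicator {-1<..<0} (0 + -1*y)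
          = ennreal (t powr (2-s) / \<bar>y\<bar> powr (2-s)) * G (-(t^2/y)) * indicator {0<..<1} y"
          unfolding i by simp
      qed
      ultimately show ?thesis by simp
    qed
    also have "\<dots> \<le> ennreal (t powr (-s)) * (\<integral>\<^sup>+b. G (-b) \<partial>lborel)"
      by (rule subst_bound[OF Gm' t0 s0])
    also have "(\<integral>\<^sup>+b. G (-b) \<partial>lborel) = (\<integral>\<^sup>+b. G b \<partial>lborel)"
      using nn_integral_real_affine[OF G_m, of "-1" 0] by simp
    also have "ennreal (t powr (-s)) * (\<integral>\<^sup>+b. G b \<partial>lborel) < \<infinity>" using Gt by (simp add: ennreal_mult_less_top)
    finally show ?thesis .
  qed
  have F0: "Fu 0 = 0" unfolding transfer_def by simp
  have "(\<integral>\<^sup>+y. ennreal (Fu y) * indicator {-1<..<1} y \<partial>lborel)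
      = (\<integral>\<^sup>+y. ennreal (Fu y) * indicator {0<..<1} y + ennreal (Fu y) * indicator {-1<..<0} y \<partial>lborel)"
  proof (intro nn_integral_cong)
    fix y show "ennreal (Fu y) * indicator {-1<..<1} y = ennreal (Fu y) * indicator {0<..<1} y + ennreal (Fu y) * indicator {-1<..<0} y"
      using F0 by (cases "y = 0") (auto simp: indicator_def)
  qed
  also have "\<dots> = (\<integral>\<^sup>+y. ennreal (Fu y) * indicator {0<..<1} y \<partial>lborel) + (\<integral>\<^sup>+y. ennreal (Fu y) * indicator {-1<..<0} y \<partial>lborel)"
    by (rule nn_integral_add) auto
  also have "\<dots> < \<infinity>" using P N by simp
  finally show ?thesis .
qed

definition I :: "real \<Rightarrow> ennreal" where
  "I a = (\<integral>\<^sup>+y. ennreal (rhoE (-y-a) * Fu y) \<partial>lborel)"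

lemma I_alt: "I a = (\<integral>\<^sup>+w. ennreal (Fu (-a-w)) * ennreal (rhoE w) \<partial>lborel)"
proof -
  have "I a = ennreal \<bar>-1\<bar> * (\<integral>\<^sup>+w. ennreal (rhoE (-(-a + -1*w)-a) * Fu (-a + -1*w)) \<partial>lborel)"
    unfolding I_def by (rule nn_integral_real_affine) auto
  also have "\<dots> = (\<integral>\<^sup>+w. ennreal (Fu (-a-w)) * ennreal (rhoE w) \<partial>lborel)"
    using Fu_nn rhoE_nn by (simp add: ennreal_mult mult.commute)
  finally show ?thesis .
qed

lemma I_fin: "I a < \<infinity>"
proof -
  obtain C where C: "C > 0" "\<And>y. 1 \<le> \<bar>y\<bar> \<Longrightarrow> Fu y \<le> C" using Fu_up1 by blast
  define h where "h = (\<lambda>w. ennreal (Fu (-a-w)) * indicator {-1<..<1} (-a-w))"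
  have hm: "h \<in> borel_measurable borel" unfolding h_def by measurable
  have pt: "ennreal (Fu (-a-w)) \<le> ennreal C + h w" for w
  proof (cases "\<bar>-a-w\<bar> < 1")
    case True then show ?thesis unfolding h_def by (simp add: indicator_def abs_less_iff)
  next
    case False
    then have "Fu (-a-w) \<le> C" by (intro C(2)) auto
    from ennreal_leI[OF this] show ?thesis by (rule add_increasing2[OF zero_le])
  qed
  have "I a \<le> (\<integral>\<^sup>+w. (ennreal C + h w) * ennreal (rhoE w) \<partial>lborel)"
    unfolding I_alt by (intro nn_integral_mono mult_right_mono pt) auto
  also have "\<dots> = (\<integral>\<^sup>+w. ennreal C * ennreal (rhoE w) \<partial>lborel) + (\<integral>\<^sup>+w. h w * ennreal (rhoE w) \<partial>lborel)"
    unfolding distrib_right using hm by (intro nn_integral_add) auto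
  also have "(\<integral>\<^sup>+w. ennreal C * ennreal (rhoE w) \<partial>lborel) = ennreal C"
    by (simp add: nn_integral_cmult rhoE_1)
  also have "(\<integral>\<^sup>+w. h w * ennreal (rhoE w) \<partial>lborel) \<le> ennreal L * (\<integral>\<^sup>+w. h w \<partial>lborel)"
    by (rule KL_upper[OF rE Lr pp hm])
  also have "(\<integral>\<^sup>+w. h w \<partial>lborel) = (\<integral>\<^sup>+y. ennreal (Fu y) * indicator {-1<..<1} y \<partial>lborel)"
  proof -
    have "(\<integral>\<^sup>+w. h w \<partial>lborel) = ennreal \<bar>-1\<bar> * (\<integral>\<^sup>+y. h (-a + -1*y) \<partial>lborel)"
      by (rule nn_integral_real_affine[OF hm]) auto
    also have "\<dots> = (\<integral>\<^sup>+y. ennreal (Fu y) * indicator {-1<..<1} y \<partial>lborel)"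
      unfolding h_def by simp
    finally show ?thesis .
  qed
  finally have "I a \<le> ennreal C + ennreal L * (\<integral>\<^sup>+y. ennreal (Fu y) * indicator {-1<..<1} y \<partial>lborel)"
    by (simp add: add_left_mono)
  also have "\<dots> < \<infinity>" using Fu_small by (simp add: ennreal_mult_less_top)
  finally show ?thesis .
qed

lemma I_low: obtains d2 where "d2 > 0" "\<And>a. ennreal (d2 / (\<bar>a\<bar>+2) powr (2-s)) \<le> I a"
proof -
  obtain d1 where d1: "d1 > 0" "\<And>y. 1 \<le> \<bar>y\<bar> \<Longrightarrow> d1 / \<bar>y\<bar> powr (2-s) \<le> Fu y" using Fu_low1 by blast
  have R: "(2::real) > 0" by simp
  obtain d where d: "d > 0" and dK: "\<And>h::real \<Rightarrow> ennreal. h \<in> borel_measurable borel \<Longrightarrow> (\<forall>w. 2 < \<bar>w\<bar> \<longrightarrow> h w = 0) \<Longrightarrow>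
     ennreal d * (\<integral>\<^sup>+w. h w \<partial>lborel) \<le> (\<integral>\<^sup>+w. h w * ennreal (rhoE w) \<partial>lborel)"
    using KL_lower[OF rE Lr pp R] by blast
  have "ennreal (d * d1 / (\<bar>a\<bar>+2) powr (2-s)) \<le> I a" for a
  proof -
    define J where "J = (if a \<le> 0 then {-2..-1::real} else {1..2})"
    define c where "c = d1 / (\<bar>a\<bar>+2) powr (2-s)"
    have c0: "c \<ge> 0" unfolding c_def using d1 by simp
    define h where "h = (\<lambda>w. ennreal (Fu (-a-w)) * indicator J w)"
    have hm: "h \<in> borel_measurable borel" unfolding h_def J_def by measurable
    have hz: "\<forall>w. 2 < \<bar>w\<bar> \<longrightarrow> h w = 0" unfolding h_def J_def by (auto simp: indicator_def)
    have pt: "ennreal c * indicator J w \<le> h w" for w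
    proof (cases "w \<in> J")
      case True
      have y1: "\<bar>a\<bar> + 1 \<le> \<bar>-a-w\<bar>" "\<bar>-a-w\<bar> \<le> \<bar>a\<bar> + 2" using True unfolding J_def by (auto split: if_splits)
      have "c \<le> d1 / \<bar>-a-w\<bar> powr (2-s)"
        unfolding c_def using d1(1) y1 s1
        by (intro divide_left_mono powr_mono2 mult_pos_pos) auto
      also have "\<dots> \<le> Fu (-a-w)" using y1 by (intro d1(2)) auto
      finally show ?thesis using True unfolding h_def by (simp add: ennreal_leI)
    qed (simp add: h_def)
    have "ennreal (d * d1 / (\<bar>a\<bar>+2) powr (2-s)) = ennreal d * (\<integral>\<^sup>+w. ennreal c * indicator J w \<partial>lborel)"
    proof -
      have "(\<integral>\<^sup>+w. ennreal c * indicator J w \<partial>lborel) = ennreal c"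
        unfolding J_def by (simp add: nn_integral_cmult_indicator)
      then show ?thesis unfolding c_def using d d1 by (simp add: ennreal_mult[symmetric])
    qed
    also have "\<dots> \<le> ennreal d * (\<integral>\<^sup>+w. h w \<partial>lborel)"
      by (intro mult_left_mono nn_integral_mono pt) auto
    also have "\<dots> \<le> (\<integral>\<^sup>+w. h w * ennreal (rhoE w) \<partial>lborel)" by (rule dK[OF hm hz])
    also have "\<dots> \<le> I a" unfolding I_alt h_def
      by (intro nn_integral_mono) (auto simp: indicator_def)
    finally show ?thesis .
  qed
  then show ?thesis using that[of "d * d1"] d d1 by auto
qed

lemma F2_eq: "transfer t s rhoE Fu x = t powr (2-s) / \<bar>x\<bar> powr (2-s) * enn2real (I (t^2/x))"
proof -
  have "(\<integral>y. rhoE (- y - t^2 / x) * Fu y \<partial>lborel) = enn2real (I (t^2/x))"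
    unfolding I_def by (rule integral_eq_nn_integral) (auto simp: rhoE_nn Fu_nn)
  then show ?thesis unfolding transfer_def[of t s rhoE Fu] by simp
qed

lemma final: "\<exists>c>0. \<forall>x. x \<noteq> 0 \<longrightarrow> c / (1 + \<bar>x\<bar> powr (2 - s)) \<le> transfer t s rhoE Fu x"
proof -
  obtain d2 where d2: "d2 > 0" "\<And>a. ennreal (d2 / (\<bar>a\<bar>+2) powr (2-s)) \<le> I a" using I_low by blast
  define q where "q = 2 - s"
  have q: "q > 0" unfolding q_def using s1 by simp
  define M where "M = max (t^2) 2 powr q * 2 powr q"
  have M: "M > 0" unfolding M_def by simp
  define c where "c = t powr q * d2 / M"
  have c: "c > 0" unfolding c_def using M d2 t0 by simp
  have "c / (1 + \<bar>x\<bar> powr q) \<le> transfer t s rhoE Fu x" if x: "x \<noteq> 0" for x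
  proof -
    define a where "a = t^2/x"
    have ax: "\<bar>a\<bar> = t^2/\<bar>x\<bar>" unfolding a_def by (simp add: abs_div)
    have xp: "\<bar>x\<bar> > 0" using x by simp
    have e1: "d2 / (\<bar>a\<bar>+2) powr q \<le> enn2real (I a)"
      using enn2real_mono[OF d2(2)[of a] I_fin[of a, unfolded infinity_ennreal_def]] d2(1)
      unfolding q_def by simp
    have e2: "\<bar>x\<bar> powr q * (\<bar>a\<bar>+2) powr q = (t^2 + 2*\<bar>x\<bar>) powr q"
    proof -
      have "\<bar>x\<bar> * (\<bar>a\<bar>+2) = t^2 + 2*\<bar>x\<bar>" unfolding ax using xp by (simp add: field_simps)
      moreover have "\<bar>x\<bar> powr q * (\<bar>a\<bar>+2) powr q = (\<bar>x\<bar> * (\<bar>a\<bar>+2)) powr q"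
        by (rule powr_mult[symmetric])
      ultimately show ?thesis by simp
    qed
    have "t^2 + 2*\<bar>x\<bar> > 0" using t0 by (intro add_pos_nonneg) auto
    then have pos: "(t^2 + 2*\<bar>x\<bar>) powr q > 0" by simp
    have "c / (1 + \<bar>x\<bar> powr q) = t powr q * d2 / (M * (1 + \<bar>x\<bar> powr q))"
      unfolding c_def by simp
    also have "\<dots> \<le> t powr q * d2 / (t^2 + 2*\<bar>x\<bar>) powr q"
    proof -
      have "0 < 1 + \<bar>x\<bar> powr q" by (intro add_pos_nonneg) auto
      then have "0 < M * (1 + \<bar>x\<bar> powr q) * (t^2 + 2*\<bar>x\<bar>) powr q" using M pos by simp
      then show ?thesis using final_arith[OF t0 q, of x] d2(1) t0 unfolding M_def[symmetric]
        by (intro divide_left_mono) auto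
    qed
    also have "\<dots> = t powr q / \<bar>x\<bar> powr q * (d2 / (\<bar>a\<bar>+2) powr q)"
      unfolding e2[symmetric] by simp
    also have "\<dots> \<le> t powr q / \<bar>x\<bar> powr q * enn2real (I a)"
      by (intro mult_left_mono e1) auto
    also have "\<dots> = transfer t s rhoE Fu x" unfolding F2_eq a_def q_def ..
    finally show ?thesis .
  qed
  then show ?thesis using c unfolding q_def by blast
qed

end

theorem lemma5p6:
  fixes L s t E :: real and K :: nat and rho p rhoE u :: "real \<Rightarrow> real"
  assumes "L_regular L rho"
    and "0 < s" and "s < 1" and "0 < t" and "1 < K"
    and "self_energy_density rho K t E p"
    and "rhoE_density rho K t E p rhoE"
    and "in_X s u" and "\<forall>x. 0 \<le> u x" and "(\<integral> x. u x \<partial>lborel) > 0"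
  shows "\<exists>c>0. \<forall>x. x \<noteq> 0 \<longrightarrow>
           c / (1 + \<bar>x\<bar> powr (2 - s)) \<le> transfer t s rhoE (transfer t s rhoE u) x"
proof -
  interpret lset L s t E K rho p rhoE u
    using assms by unfold_locales auto
  show ?thesis by (rule final)
qed

end
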